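(* There exist maps $f_r$ and $f_c$, where $f_r$ assigns to each $n\times n$ matrix $R$ with entries in $[0,1]$ a mixed strategy (probability distribution over rows) and $f_c$ assigns to each $n\times n$ matrix $C$ with entries in $[0,1]$ a mixed strategy (probability distribution over columns), such that for every $n$ and every bimatrix game $(R,C)$ with $R,C\in[0,1]^{n\times n}$, the profile $(f_r(R),f_c(C))$ is a $\frac{3}{4}$-approximate Nash equilibrium of $(R,C)$. (That is, a $\frac34$-approximate Nash equilibrium can be guaranteed even with no communication between the players.)
   Context: A bimatrix game $(R,C)$ consists of two $n\times n$ payoff matrices: $R$ for the row player, $C$ for the column player, with entries in $[0,1]$. Mixed strategies are probability vectors $\mathbf{x}$ (over rows) and $\mathbf{y}$ (over columns); payoffs are $\mathbf{x}^T R\mathbf{y}$ and $\mathbf{x}^T C\mathbf{y}$. Writing $\mathbf{e}_i$ for the $i$-th unit vector, $(\mathbf{x},\mathbf{y})$ is an $\epsilon$-approximate Nash equilibrium if for all $i$: $\mathbf{e}_i^T R\mathbf{y}\le \mathbf{x}^T R\mathbf{y}+\epsilon$ and $\mathbf{x}^T C\mathbf{e}_i\le \mathbf{x}^T C\mathbf{y}+\epsilon$. *)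

theory Defs
  imports Complex_Main
begin

text \<open>An n x n matrix is represented as a function nat => nat => real, only the
entries with indices < n being relevant; a mixed strategy over n pure strategies is
a function nat => real, only entries with index < n being relevant.\<close>

definition unit_matrix :: "nat \<Rightarrow> (nat \<Rightarrow> nat \<Rightarrow> real) \<Rightarrow> bool" where
  "unit_matrix n A \<longleftrightarrow> (\<forall>i<n. \<forall>j<n. 0 \<le> A i j \<and> A i j \<le> 1)"

definition mixed_strategy :: "nat \<Rightarrow> (nat \<Rightarrow> real) \<Rightarrow> bool" where
  "mixed_strategy n x \<longleftrightarrow> (\<forall>i<n. 0 \<le> x i) \<and> (\<Sum>i<n. x i) = 1"

definition payoff :: "nat \<Rightarrow> (nat \<Rightarrow> nat \<Rightarrow> real) \<Rightarrow> (nat \<Rightarrow> real) \<Rightarrow> (nat \<Rightarrow> real) \<Rightarrow> real" where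
  "payoff n A x y = (\<Sum>i<n. \<Sum>j<n. x i * A i j * y j)"

definition unit_vec :: "nat \<Rightarrow> nat \<Rightarrow> real" where
  "unit_vec k = (\<lambda>i. if i = k then 1 else 0)"

definition approx_nash ::
  "nat \<Rightarrow> (nat \<Rightarrow> nat \<Rightarrow> real) \<Rightarrow> (nat \<Rightarrow> nat \<Rightarrow> real) \<Rightarrow> (nat \<Rightarrow> real) \<Rightarrow> (nat \<Rightarrow> real) \<Rightarrow> real \<Rightarrow> bool" where
  "approx_nash n R C x y \<epsilon> \<longleftrightarrow>
     (\<forall>i<n. payoff n R (unit_vec i) y \<le> payoff n R x y + \<epsilon> \<and>
            payoff n C x (unit_vec i) \<le> payoff n C x y + \<epsilon>)"

end

theory Submission
  imports Defs
begin

lemma ex_argmax: "0 < (n::nat) \<Longrightarrow> \<exists>a<n. \<forall>i<n. (f::nat\<Rightarrow>real) i \<le> f a"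
proof (induction n)
  case 0 then show ?case by simp
next
  case (Suc n)
  show ?case
  proof (cases "n = 0")
    case True then show ?thesis by auto
  next
    case False
    then obtain a where a: "a<n" "\<forall>i<n. f i \<le> f a" using Suc.IH by auto
    show ?thesis
    proof (cases "f n \<le> f a")
      case True then show ?thesis using a by (auto intro!: exI[of _ a] simp: less_Suc_eq)
    next
      case False then show ?thesis using a
        by (auto intro!: exI[of _ n] simp: less_Suc_eq)
    qed
  qed
qed

definition argm :: "nat \<Rightarrow> (nat \<Rightarrow> real) \<Rightarrow> nat" where
  "argm n f = (SOME a. a<n \<and> (\<forall>i<n. f i \<le> f a))"

lemma argm: "0 < n \<Longrightarrow> argm n f < n \<and> (\<forall>i<n. f i \<le> f (argm n f))"
  unfolding argm_def using ex_argmax[of n f] by (rule someI_ex[OF exE]) auto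

definition vh :: "nat \<Rightarrow> nat \<Rightarrow> real" where
  "vh a = (\<lambda>i. (if i=0 then 1/2 else 0) + (if i=a then 1/2 else 0))"

lemma vh_nonneg: "0 \<le> vh a i" by (simp add: vh_def)

lemma vh_sum: "b < n \<Longrightarrow> (\<Sum>j<n. g j * vh b j) = g 0 / 2 + g b / 2"
proof -
  assume b: "b < n"
  have "(\<Sum>j<n. g j * vh b j) = (\<Sum>j<n. (if j = 0 then g j / 2 else 0) + (if j = b then g j / 2 else 0))"
    by (rule sum.cong) (auto simp: vh_def)
  also have "\<dots> = g 0 / 2 + g b / 2" using b by (simp add: sum.distrib sum.delta')
  finally show ?thesis .
qed

lemma vh_sum': "b < n \<Longrightarrow> (\<Sum>j<n. vh b j * g j) = g 0 / 2 + g b / 2"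
  using vh_sum[of b n g] by (simp add: mult.commute)

lemma vh_mixed: "a < n \<Longrightarrow> mixed_strategy n (vh a)"
  unfolding mixed_strategy_def using vh_sum'[of a n "\<lambda>_. 1"] vh_nonneg by auto

lemma payoff_row: "payoff n R (unit_vec i) y = (if i < n then (\<Sum>j<n. R i j * y j) else 0)"
proof -
  have "payoff n R (unit_vec i) y = (\<Sum>i'<n. if i' = i then (\<Sum>j<n. R i j * y j) else 0)"
    unfolding payoff_def unit_vec_def by (rule sum.cong) auto
  then show ?thesis by (simp add: sum.delta')
qed

lemma payoff_col: "payoff n C x (unit_vec j) = (if j < n then (\<Sum>i<n. x i * C i j) else 0)"
proof -
  have "payoff n C x (unit_vec j) = (\<Sum>i<n. \<Sum>j'<n. if j' = j then x i * C i j else 0)"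
    unfolding payoff_def unit_vec_def by (intro sum.cong) auto
  then show ?thesis by (simp add: sum.delta')
qed

lemma payoff_lb:
  assumes "unit_matrix n A" "a<n" "b<n" "\<forall>i. 0 \<le> x i" "\<forall>j. 0 \<le> y j"
  shows "x a * A a b * y b \<le> payoff n A x y"
proof -
  have nn: "\<And>i j. i<n \<Longrightarrow> j<n \<Longrightarrow> 0 \<le> x i * A i j * y j"
    using assms unfolding unit_matrix_def by auto
  have "x a * A a b * y b \<le> (\<Sum>j<n. x a * A a j * y j)"
    by (rule member_le_sum) (use assms nn in auto)
  also have "\<dots> \<le> (\<Sum>i<n. \<Sum>j<n. x i * A i j * y j)"
    by (rule member_le_sum[where f="\<lambda>i. \<Sum>j<n. x i * A i j * y j"])
       (use assms nn in \<open>auto intro: sum_nonneg\<close>)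
  finally show ?thesis unfolding payoff_def .
qed

lemma main:
  assumes h: "1 \<le> n \<and> unit_matrix n R \<and> unit_matrix n (C :: nat \<Rightarrow> nat \<Rightarrow> real)"
  shows "mixed_strategy n (vh (argm n (\<lambda>i. R i 0))) \<and> mixed_strategy n (vh (argm n (\<lambda>j. C 0 j))) \<and>
      approx_nash n R C (vh (argm n (\<lambda>i. R i 0))) (vh (argm n (\<lambda>j. C 0 j))) (3/4)"
proof -
  define a where "a = argm n (\<lambda>i. R i 0)"
  define b where "b = argm n (\<lambda>j. C 0 j)"
  have n0: "0 < n" using h by auto
  have a: "a < n" "\<forall>i<n. R i 0 \<le> R a 0" using argm[OF n0, of "\<lambda>i. R i 0"] unfolding a_def by auto
  have b: "b < n" "\<forall>j<n. C 0 j \<le> C 0 b" using argm[OF n0, of "\<lambda>j. C 0 j"] unfolding b_def by auto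
  have R: "\<forall>i<n. \<forall>j<n. 0 \<le> R i j \<and> R i j \<le> 1" and C: "\<forall>i<n. \<forall>j<n. 0 \<le> C i j \<and> C i j \<le> 1"
    using h unfolding unit_matrix_def by auto
  have xa: "1/2 \<le> vh a a" "1/2 \<le> vh b 0" "1/2 \<le> vh a 0" "1/2 \<le> vh b b" by (auto simp: vh_def)
  have lbR: "vh a a * R a 0 * vh b 0 \<le> payoff n R (vh a) (vh b)"
    by (rule payoff_lb) (use h a b n0 vh_nonneg in auto)
  have lbC: "vh a 0 * C 0 b * vh b b \<le> payoff n C (vh a) (vh b)"
    by (rule payoff_lb) (use h a b n0 vh_nonneg in auto)
  have R1: "R a 0 / 4 \<le> vh a a * R a 0 * vh b 0"
  proof -
    have "(1/2) * (1/2) * R a 0 \<le> vh a a * vh b 0 * R a 0"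
      by (rule mult_right_mono[OF mult_mono]) (use xa R a n0 in auto)
    then show ?thesis by (simp add: mult_ac)
  qed
  have C1: "C 0 b / 4 \<le> vh a 0 * C 0 b * vh b b"
  proof -
    have "(1/2) * (1/2) * C 0 b \<le> vh a 0 * vh b b * C 0 b"
      by (rule mult_right_mono[OF mult_mono]) (use xa C b n0 in auto)
    then show ?thesis by (simp add: mult_ac)
  qed
  have "approx_nash n R C (vh a) (vh b) (3/4)"
    unfolding approx_nash_def
  proof (intro allI impI conjI)
    fix i assume i: "i < n"
    have "payoff n R (unit_vec i) (vh b) = R i 0 / 2 + R i b / 2"
      using i b by (simp add: payoff_row vh_sum)
    moreover have "R i 0 \<le> R a 0" "R i b \<le> 1" "R a 0 \<le> 1" using a b R i n0 by auto
    ultimately show "payoff n R (unit_vec i) (vh b) \<le> payoff n R (vh a) (vh b) + 3/4"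
      using lbR R1 by linarith
  next
    fix j assume j: "j < n"
    have "payoff n C (vh a) (unit_vec j) = C 0 j / 2 + C a j / 2"
      using j a by (simp add: payoff_col vh_sum')
    moreover have "C 0 j \<le> C 0 b" "C a j \<le> 1" "C 0 b \<le> 1" using a b C j n0 by auto
    ultimately show "payoff n C (vh a) (unit_vec j) \<le> payoff n C (vh a) (vh b) + 3/4"
      using lbC C1 by linarith
  qed
  then show ?thesis
    using vh_mixed a b unfolding a_def b_def by auto
qed


theorem theorem1:
  shows "\<exists>(f_r :: nat \<Rightarrow> (nat \<Rightarrow> nat \<Rightarrow> real) \<Rightarrow> (nat \<Rightarrow> real))
           (f_c :: nat \<Rightarrow> (nat \<Rightarrow> nat \<Rightarrow> real) \<Rightarrow> (nat \<Rightarrow> real)).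
    \<forall>n R C. 1 \<le> n \<and> unit_matrix n R \<and> unit_matrix n C \<longrightarrow>
      mixed_strategy n (f_r n R) \<and> mixed_strategy n (f_c n C) \<and>
      approx_nash n R C (f_r n R) (f_c n C) (3/4)"
proof (intro exI allI impI)
  fix n R C assume "1 \<le> n \<and> unit_matrix n R \<and> unit_matrix n (C :: nat \<Rightarrow> nat \<Rightarrow> real)"
  from main[OF this] show "mixed_strategy n ((\<lambda>n R. vh (argm n (\<lambda>i. R i 0))) n R) \<and> mixed_strategy n ((\<lambda>n C. vh (argm n (\<lambda>j. C 0 j))) n C) \<and>
      approx_nash n R C ((\<lambda>n R. vh (argm n (\<lambda>i. R i 0))) n R) ((\<lambda>n C. vh (argm n (\<lambda>j. C 0 j))) n C) (3/4)"
    by simp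
qed

end
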